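(* Let $P$ be a product rule. The $P$-product is bilinear, associative and commutative if and only if $P$ is simple, i.e. there exist $\alpha,\beta,\gamma\in\mathbb Q$ with $\alpha\gamma=\beta(\beta-1)$ such that \[P(x,\dot x,y,\dot y)\approx \alpha\cdot xy+\beta\cdot(x\dot y+\dot x y)+\gamma\cdot\dot x\dot y.\]
   Context: Let $\Sigma$ be a finite alphabet, $\Sigma^*$ the set of finite words with empty word $\varepsilon$. A series is a function $f:\Sigma^*\to\mathbb Q$; write $f_w=f(w)$; the set of series $\mathbb Q\langle\langle\Sigma\rangle\rangle$ is a $\mathbb Q$-vector space under pointwise operations, with zero series $\mathbb 0$. For $a\in\Sigma$ the left derivative $\delta_a f$ is the series $w\mapsto f(aw)$. Terms: for a set $X$ of variables, $\mathrm{Terms}(X)$ is the set of syntactic terms generated by $u,v::=x\mid 0\mid c\cdot u\mid u+v\mid u*v$ ($x\in X$, $c\in\mathbb Q$); we write $uv$ for $u*v$. A product rule is a term $P\in\mathrm{Terms}(\{x,\dot x,y,\dot y\})$; $P(s_1,s_2,s_3,s_4)$ denotes substitution for $x,\dot x,y,\dot y$. $P$-product: the $P$-product $*$ on series and the semantics $[\![u]\!]_\varrho$ of terms under valuations $\varrho:X\to\mathbb Q\langle\langle\Sigma\rangle\rangle$ are the unique pair with $(f*g)_\varepsilon=f_\varepsilon g_\varepsilon$, $\delta_a(f*g)=[\![P]\!]_{[x\mapsto f,\dot x\mapsto\delta_af,y\mapsto g,\dot y\mapsto\delta_ag]}$ for all $a\in\Sigma$, and $[\![0]\!]_\varrho=\mathbb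 0$, $[\![x]\!]_\varrho=\varrho(x)$, $[\![c\cdot u]\!]_\varrho=c[\![u]\!]_\varrho$, $[\![u+v]\!]_\varrho=[\![u]\!]_\varrho+[\![v]\!]_\varrho$, $[\![u*v]\!]_\varrho=[\![u]\!]_\varrho*[\![v]\!]_\varrho$. BAC means: for all series $f,g,h$ and $c\in\mathbb Q$, $(f+g)*h=f*h+g*h$, $(c f)*g=c(f*g)$, $f*(g*h)=(f*g)*h$, $f*g=g*f$. Term equivalence: $u\approx v$ iff $u,v$ denote the same polynomial in the commutative polynomial ring $\mathbb Q[X]$ when the term constructors are read as polynomial operations. *)

theory Defs
  imports Complex_Main "HOL-Library.Poly_Mapping"
begin

type_synonym 'a series = "'a list \<Rightarrow> rat"

definition lderiv :: "'a \<Rightarrow> 'a series \<Rightarrow> 'a series" where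
  "lderiv a f = (\<lambda>w. f (a # w))"

datatype 'v trm = Var 'v | Zero | Scal rat "'v trm" | Add "'v trm" "'v trm" | Mul "'v trm" "'v trm"

datatype pvar = X | DX | Y | DY

type_synonym prule = "pvar trm"

fun sem :: "('a series \<Rightarrow> 'a series \<Rightarrow> 'a series) \<Rightarrow> ('v \<Rightarrow> 'a series) \<Rightarrow> 'v trm \<Rightarrow> 'a series" where
  "sem mul \<rho> (Var x) = \<rho> x"
| "sem mul \<rho> Zero = (\<lambda>w. 0)"
| "sem mul \<rho> (Scal c u) = (\<lambda>w. c * sem mul \<rho> u w)"
| "sem mul \<rho> (Add u v) = (\<lambda>w. sem mul \<rho> u w + sem mul \<rho> v w)"
| "sem mul \<rho> (Mul u v) = mul (sem mul \<rho> u) (sem mul \<rho> v)"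

definition pval :: "'a series \<Rightarrow> 'a series \<Rightarrow> 'a series \<Rightarrow> 'a series \<Rightarrow> pvar \<Rightarrow> 'a series" where
  "pval f df g dg v = (case v of X \<Rightarrow> f | DX \<Rightarrow> df | Y \<Rightarrow> g | DY \<Rightarrow> dg)"

definition is_P_product :: "prule \<Rightarrow> ('a series \<Rightarrow> 'a series \<Rightarrow> 'a series) \<Rightarrow> bool" where
  "is_P_product P mul \<longleftrightarrow>
     (\<forall>f g. mul f g [] = f [] * g []) \<and>
     (\<forall>f g a. lderiv a (mul f g) = sem mul (pval f (lderiv a f) g (lderiv a g)) P)"

definition pprod :: "prule \<Rightarrow> 'a series \<Rightarrow> 'a series \<Rightarrow> 'a series" where
  "pprod P = (THE mul. is_P_product P mul)"

definition BAC :: "('a series \<Rightarrow> 'a series \<Rightarrow> 'a series) \<Rightarrow> bool" where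
  "BAC mul \<longleftrightarrow>
     (\<forall>f g h. mul (\<lambda>w. f w + g w) h = (\<lambda>w. mul f h w + mul g h w)) \<and>
     (\<forall>(c::rat) f g. mul (\<lambda>w. c * f w) g = (\<lambda>w. c * mul f g w)) \<and>
     (\<forall>f g h. mul f (mul g h) = mul (mul f g) h) \<and>
     (\<forall>f g. mul f g = mul g f)"

(* commutative polynomial ring Q[V], realised as finitely supported maps
   from monomials (finitely supported exponent maps) to coefficients *)
type_synonym 'v mpoly = "('v \<Rightarrow>\<^sub>0 nat) \<Rightarrow>\<^sub>0 rat"

definition pvar_poly :: "'v \<Rightarrow> 'v mpoly" where
  "pvar_poly x = Poly_Mapping.single (Poly_Mapping.single x 1) 1"

fun poly_of :: "'v trm \<Rightarrow> 'v mpoly" where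
  "poly_of (Var x) = pvar_poly x"
| "poly_of Zero = 0"
| "poly_of (Scal c u) = Poly_Mapping.single 0 c * poly_of u"
| "poly_of (Add u v) = poly_of u + poly_of v"
| "poly_of (Mul u v) = poly_of u * poly_of v"

definition term_equiv :: "'v trm \<Rightarrow> 'v trm \<Rightarrow> bool" (infix "\<approx>" 50) where
  "u \<approx> v \<longleftrightarrow> poly_of u = poly_of v"

definition simple :: "prule \<Rightarrow> bool" where
  "simple P \<longleftrightarrow> (\<exists>\<alpha> \<beta> \<gamma> :: rat. \<alpha> * \<gamma> = \<beta> * (\<beta> - 1) \<and>
     P \<approx> Add (Add (Scal \<alpha> (Mul (Var X) (Var Y)))
                  (Scal \<beta> (Add (Mul (Var X) (Var DY)) (Mul (Var DX) (Var Y)))))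
             (Scal \<gamma> (Mul (Var DX) (Var DY))))"

end

theory Submission
  imports Defs "HOL-Library.Function_Algebras"
begin


definition agree :: "nat \<Rightarrow> 'a series \<Rightarrow> 'a series \<Rightarrow> bool" where
  "agree L f g \<longleftrightarrow> (\<forall>v. length v \<le> L \<longrightarrow> f v = g v)"

lemma sem_causal:
  assumes "\<And>F G F' G'. agree L F F' \<Longrightarrow> agree L G G' \<Longrightarrow> agree L (mul1 F G) (mul2 F' G')"
    and "\<And>x. agree L (\<rho>1 x) (\<rho>2 x)"
  shows "agree L (sem mul1 \<rho>1 u) (sem mul2 \<rho>2 u)"
  using assms(2)
proof (induction u)
  case (Mul u1 u2)
  then show ?case by (simp add: assms(1))
qed (auto simp: agree_def)

lemma agree_pval:
  assumes "agree (Suc L) f f'" "agree (Suc L) g g'"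
  shows "agree L (pval f (lderiv a f) g (lderiv a g) x) (pval f' (lderiv a f') g' (lderiv a g') x)"
  using assms by (cases x) (auto simp: agree_def pval_def lderiv_def)

lemma agree_mono: "agree L f g \<Longrightarrow> L' \<le> L \<Longrightarrow> agree L' f g"
  by (auto simp: agree_def)

primrec M :: "prule \<Rightarrow> nat \<Rightarrow> 'a series \<Rightarrow> 'a series \<Rightarrow> 'a series" where
  "M P 0 f g = (\<lambda>w. f [] * g [])"
| "M P (Suc n) f g = (\<lambda>w. case w of [] \<Rightarrow> f [] * g [] | a # w' \<Rightarrow> sem (M P n) (pval f (lderiv a f) g (lderiv a g)) P w')"

lemma M_Nil: "M P n f g [] = f [] * g []"
  by (cases n) auto

lemma M_agree:
  "agree L F F' \<Longrightarrow> agree L G G' \<Longrightarrow> L \<le> n \<Longrightarrow> L \<le> k \<Longrightarrow> agree L (M P n F G) (M P k F' G')"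
proof (induction n arbitrary: k L F G F' G')
  case 0
  then show ?case by (auto simp: agree_def M_Nil)
next
  case (Suc n)
  show ?case unfolding agree_def
  proof (intro allI impI)
    fix v :: "'a list" assume v: "length v \<le> L"
    show "M P (Suc n) F G v = M P k F' G' v"
    proof (cases v)
      case Nil
      then show ?thesis using Suc.prems by (simp add: M_Nil agree_def)
    next
      case (Cons a v')
      obtain L' where L: "L = Suc L'" using v Cons by (cases L) auto
      obtain k' where k: "k = Suc k'" using Suc.prems L by (cases k) auto
      have "agree L' (sem (M P n) (pval F (lderiv a F) G (lderiv a G)) P)
                     (sem (M P k') (pval F' (lderiv a F') G' (lderiv a G')) P)"
        apply (rule sem_causal)
         apply (rule Suc.IH) using Suc.prems L k apply auto[4]
        by (rule agree_pval) (use Suc.prems L in auto)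
      then show ?thesis using Cons L k v by (simp add: agree_def)
    qed
  qed
qed

lemma P_product_exists: "is_P_product P (\<lambda>f g w. M P (length w) f g w)"
  unfolding is_P_product_def
proof (intro conjI allI)
  fix f g :: "'a series" and a
  show "lderiv a (\<lambda>w. M P (length w) f g w) = sem (\<lambda>f g w. M P (length w) f g w) (pval f (lderiv a f) g (lderiv a g)) P"
  proof
    fix w :: "'a list"
    have "agree (length w) (sem (M P (length w)) (pval f (lderiv a f) g (lderiv a g)) P)
            (sem (\<lambda>f g w. M P (length w) f g w) (pval f (lderiv a f) g (lderiv a g)) P)"
    proof (rule sem_causal)
      fix F G F' G' :: "'a series"
      assume "agree (length w) F F'" "agree (length w) G G'"
      then show "agree (length w) (M P (length w) F G) (\<lambda>w. M P (length w) F' G' w)"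
        unfolding agree_def
      proof (intro allI impI)
        fix v :: "'a list" assume v: "length v \<le> length w"
        have "agree (length v) (M P (length w) F G) (M P (length v) F' G')"
          by (rule M_agree) (use v agree_mono \<open>agree (length w) F F'\<close> \<open>agree (length w) G G'\<close> in auto)
        then show "M P (length w) F G v = M P (length v) F' G' v" by (simp add: agree_def)
      qed
    qed (simp add: agree_def)
    then show "lderiv a (\<lambda>w. M P (length w) f g w) w = sem (\<lambda>f g w. M P (length w) f g w) (pval f (lderiv a f) g (lderiv a g)) P w"
      by (simp add: agree_def lderiv_def)
  qed
qed (simp add: M_Nil)

lemma P_product_unique_agree:
  assumes "is_P_product P m1" "is_P_product P m2"
  shows "agree L F F' \<Longrightarrow> agree L G G' \<Longrightarrow> agree L (m1 F G) (m2 F' G')"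
proof (induction L arbitrary: F G F' G')
  case 0
  then show ?case using assms by (auto simp: agree_def is_P_product_def)
next
  case (Suc L)
  show ?case unfolding agree_def
  proof (intro allI impI)
    fix v :: "'a list" assume v: "length v \<le> Suc L"
    show "m1 F G v = m2 F' G' v"
    proof (cases v)
      case Nil
      then show ?thesis using Suc.prems assms by (simp add: agree_def is_P_product_def)
    next
      case (Cons a v')
      have "agree L (sem m1 (pval F (lderiv a F) G (lderiv a G)) P)
                     (sem m2 (pval F' (lderiv a F') G' (lderiv a G')) P)"
        apply (rule sem_causal)
         apply (rule Suc.IH, assumption, assumption)
        by (rule agree_pval) (use Suc.prems in auto)
      moreover have "lderiv a (m1 F G) v' = sem m1 (pval F (lderiv a F) G (lderiv a G)) P v'"
        using assms(1) unfolding is_P_product_def by simp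
      moreover have "lderiv a (m2 F' G') v' = sem m2 (pval F' (lderiv a F') G' (lderiv a G')) P v'"
        using assms(2) unfolding is_P_product_def by simp
      ultimately show ?thesis using Cons v by (simp add: agree_def lderiv_def)
    qed
  qed
qed

lemma P_product_unique:
  assumes "is_P_product P m1" "is_P_product P m2"
  shows "m1 = m2"
proof (intro ext)
  fix f g :: "'a series" and w :: "'a list"
  have "agree (length w) (m1 f g) (m2 f g)"
    using P_product_unique_agree[OF assms] by (simp add: agree_def)
  then show "m1 f g w = m2 f g w" by (simp add: agree_def)
qed

lemma pprod_is: "is_P_product P (pprod P)"
  unfolding pprod_def
  by (rule theI[of "is_P_product P", OF P_product_exists]) (rule P_product_unique[OF _ P_product_exists])

lemma pprod_eq: "is_P_product P m \<Longrightarrow> pprod P = m"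
  using pprod_is P_product_unique by blast




definition Sterm :: "rat \<Rightarrow> rat \<Rightarrow> rat \<Rightarrow> prule" where
  "Sterm \<alpha> \<beta> \<gamma> = Add (Add (Scal \<alpha> (Mul (Var X) (Var Y)))
                  (Scal \<beta> (Add (Mul (Var X) (Var DY)) (Mul (Var DX) (Var Y)))))
             (Scal \<gamma> (Mul (Var DX) (Var DY)))"

locale sprod =
  fixes \<alpha> \<beta> \<gamma> :: rat and mul :: "'a series \<Rightarrow> 'a series \<Rightarrow> 'a series"
  assumes isP: "is_P_product (Sterm \<alpha> \<beta> \<gamma>) mul"
begin

lemma recD: "lderiv a (mul f g) = (\<lambda>w. \<alpha> * mul f g w + \<beta> * (mul f (lderiv a g) w + mul (lderiv a f) g w)
    + \<gamma> * mul (lderiv a f) (lderiv a g) w)"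
  using isP unfolding is_P_product_def by (simp add: Sterm_def pval_def)

lemma rec: "mul f g (a # w) = \<alpha> * mul f g w + \<beta> * (mul f (lderiv a g) w + mul (lderiv a f) g w)
    + \<gamma> * mul (lderiv a f) (lderiv a g) w"
proof -
  have "mul f g (a # w) = lderiv a (mul f g) w" by (simp add: lderiv_def)
  then show ?thesis by (simp add: recD)
qed

lemma nil: "mul f g [] = f [] * g []"
  using isP unfolding is_P_product_def by simp

lemma lderiv_add: "lderiv a (\<lambda>w. f w + g w) = (\<lambda>w. lderiv a f w + lderiv a g w)"
  by (simp add: lderiv_def)
lemma lderiv_scal: "lderiv a (\<lambda>w. c * f w) = (\<lambda>w. c * lderiv a f w)"
  by (simp add: lderiv_def)

lemma add_left_pt: "mul (\<lambda>w. f1 w + f2 w) g w = mul f1 g w + mul f2 g w"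
proof (induction w arbitrary: f1 f2 g)
  case Nil
  then show ?case by (simp add: nil algebra_simps)
next
  case (Cons a w)
  show ?case by (simp only: rec lderiv_add Cons.IH) (simp add: algebra_simps)
qed

lemma scal_left_pt: "mul (\<lambda>w. c * f w) g w = c * mul f g w"
proof (induction w arbitrary: f g)
  case Nil
  then show ?case by (simp add: nil algebra_simps)
next
  case (Cons a w)
  show ?case by (simp only: rec lderiv_scal Cons.IH) (simp add: algebra_simps)
qed

lemma comm_pt: "mul f g w = mul g f w"
proof (induction w arbitrary: f g)
  case Nil
  then show ?case by (simp add: nil algebra_simps)
next
  case (Cons a w)
  show ?case by (simp only: rec Cons.IH[of f] Cons.IH[of "lderiv a f"]) (simp add: algebra_simps)
qed

lemma add_left: "mul (\<lambda>w. f1 w + f2 w) g = (\<lambda>w. mul f1 g w + mul f2 g w)"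
  by (rule ext) (rule add_left_pt)
lemma scal_left: "mul (\<lambda>w. c * f w) g = (\<lambda>w. c * mul f g w)"
  by (rule ext) (rule scal_left_pt)
lemma comm: "mul f g = mul g f"
  by (rule ext) (rule comm_pt)
lemma add_right: "mul g (\<lambda>w. f1 w + f2 w) = (\<lambda>w. mul g f1 w + mul g f2 w)"
  using add_left comm by metis
lemma scal_right: "mul g (\<lambda>w. c * f w) = (\<lambda>w. c * mul g f w)"
  using scal_left comm by metis

lemma assoc_pt:
  assumes cond: "\<alpha> * \<gamma> = \<beta> * (\<beta> - 1)"
  shows "mul f (mul g h) w = mul (mul f g) h w"
proof (induction w arbitrary: f g h)
  case Nil
  then show ?case by (simp add: nil algebra_simps)
next
  case (Cons a w)
  show ?case
    apply (simp only: rec recD add_left add_right scal_left scal_right Cons.IH)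
    using cond by algebra
qed

lemma BAC:
  assumes cond: "\<alpha> * \<gamma> = \<beta> * (\<beta> - 1)"
  shows "BAC mul"
  unfolding BAC_def
  by (intro conjI allI add_left scal_left comm ext assoc_pt[OF cond])

end




lemma poly_expand: "p = (\<Sum>m\<in>Poly_Mapping.keys p. Poly_Mapping.single m (Poly_Mapping.lookup p m))"
proof (rule poly_mapping_eqI)
  fix k
  have "Poly_Mapping.lookup (\<Sum>m\<in>Poly_Mapping.keys p. Poly_Mapping.single m (Poly_Mapping.lookup p m)) k = (\<Sum>m\<in>Poly_Mapping.keys p. (if m = k then Poly_Mapping.lookup p m else 0))"
    by (simp add: lookup_sum lookup_single when_def)
  also have "\<dots> = Poly_Mapping.lookup p k"
    by (simp add: in_keys_iff)
  finally show "Poly_Mapping.lookup p k = Poly_Mapping.lookup (\<Sum>m\<in>Poly_Mapping.keys p. Poly_Mapping.single m (Poly_Mapping.lookup p m)) k" by simp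
qed

lemma pvar_pm_eqI: "(\<And>v. Poly_Mapping.lookup (a::pvar \<Rightarrow>\<^sub>0 nat) v = Poly_Mapping.lookup b v) \<Longrightarrow> a = b"
  by (rule poly_mapping_eqI) auto

lemma pm_zero_iff: "(m::pvar \<Rightarrow>\<^sub>0 nat) = 0 \<longleftrightarrow> Poly_Mapping.lookup m X = 0 \<and> Poly_Mapping.lookup m DX = 0 \<and> Poly_Mapping.lookup m Y = 0 \<and> Poly_Mapping.lookup m DY = 0"
proof
  assume "Poly_Mapping.lookup m X = 0 \<and> Poly_Mapping.lookup m DX = 0 \<and> Poly_Mapping.lookup m Y = 0 \<and> Poly_Mapping.lookup m DY = 0"
  then show "m = 0" by (intro poly_mapping_eqI) (case_tac k; simp)
qed simp

lemma pm_add_zero: "(a::'v \<Rightarrow>\<^sub>0 nat) + b = 0 \<Longrightarrow> a = 0"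
proof (rule poly_mapping_eqI)
  fix k assume "a + b = 0"
  then have "Poly_Mapping.lookup (a + b) k = 0" by simp
  then show "Poly_Mapping.lookup a k = Poly_Mapping.lookup 0 k" by (simp add: lookup_add)
qed

lemma zero_notin_keys_poly_of: "0 \<notin> Poly_Mapping.keys (poly_of u)"
proof (induction u)
  case (Var x)
  have "Poly_Mapping.single x (1::nat) \<noteq> 0"
    by (metis lookup_single_eq lookup_zero one_neq_zero)
  then show ?case by (simp add: pvar_poly_def)
next
  case (Scal c u)
  show ?case
  proof
    assume "0 \<in> Poly_Mapping.keys (poly_of (Scal c u))"
    then have "0 \<in> Poly_Mapping.keys (Poly_Mapping.single 0 c * poly_of u)" by simp
    then obtain a b where "a \<in> Poly_Mapping.keys (Poly_Mapping.single 0 c)" "b \<in> Poly_Mapping.keys (poly_of u)" "0 = a + b"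
      using keys_mult[of "Poly_Mapping.single 0 c" "poly_of u"] by blast
    then have "b = 0" by (cases "c = 0") auto
    then show False using Scal \<open>b \<in> _\<close> by simp
  qed
next
  case (Add u1 u2)
  then show ?case using keys_add[of "poly_of u1" "poly_of u2"] by auto
next
  case (Mul u1 u2)
  show ?case
  proof
    assume "0 \<in> Poly_Mapping.keys (poly_of (Mul u1 u2))"
    then have "0 \<in> Poly_Mapping.keys (poly_of u1 * poly_of u2)" by simp
    then obtain a b where "a \<in> Poly_Mapping.keys (poly_of u1)" "0 = a + b"
      using keys_mult[of "poly_of u1" "poly_of u2"] by blast
    moreover have "a = 0" using pm_add_zero[of a b] \<open>0 = a + b\<close> by simp
    ultimately show False using Mul by simp
  qed
qed simp

locale balg =
  fixes mul :: "'b::ab_group_add \<Rightarrow> 'b \<Rightarrow> 'b" and sc :: "rat \<Rightarrow> 'b \<Rightarrow> 'b"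
  assumes madd: "mul (a + b) c = mul a c + mul b c"
    and msc: "mul (sc r a) b = sc r (mul a b)"
    and mcomm: "mul a b = mul b a"
    and massoc: "mul a (mul b c) = mul (mul a b) c"
    and sc_add: "sc r (a + b) = sc r a + sc r b"
    and sc_add2: "sc (r + s) a = sc r a + sc s a"
    and sc_mult: "sc r (sc s a) = sc (r * s) a"
    and sc_one: "sc 1 a = a"
begin

lemma sc_zero_left[simp]: "sc 0 a = 0"
  using sc_add2[of 0 0 a] by simp
lemma sc_zero_right[simp]: "sc r 0 = 0"
  using sc_add[of r 0 0] by simp
lemma mzero[simp]: "mul 0 b = 0"
  using madd[of 0 0 b] by simp
lemma madd2: "mul a (b + c) = mul a b + mul a c"
  by (simp add: mcomm[of a] madd)
lemma msc2: "mul a (sc r b) = sc r (mul a b)"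
  by (simp add: mcomm[of a] msc)

lemma sc_sum: "sc r (\<Sum>i\<in>I. f i) = (\<Sum>i\<in>I. sc r (f i))"
  by (induction I rule: infinite_finite_induct) (auto simp: sc_add)
lemma mul_sum_left: "mul (\<Sum>i\<in>I. f i) b = (\<Sum>i\<in>I. mul (f i) b)"
  by (induction I rule: infinite_finite_induct) (auto simp: madd)
lemma mul_sum_right: "mul b (\<Sum>i\<in>I. f i) = (\<Sum>i\<in>I. mul b (f i))"
  by (simp add: mcomm[of b] mul_sum_left)

fun omul :: "'b option \<Rightarrow> 'b option \<Rightarrow> 'b option" where
  "omul None y = y"
| "omul (Some a) None = Some a"
| "omul (Some a) (Some b) = Some (mul a b)"

lemma omul_None2[simp]: "omul x None = x"
  by (cases x) auto
lemma omul_assoc: "omul (omul x y) z = omul x (omul y z)"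
  by (cases x; cases y; cases z) (auto simp: massoc)
lemma omul_comm: "omul x y = omul y x"
  by (cases x; cases y) (auto simp: mcomm)
lemma omul_lcomm: "omul x (omul y z) = omul y (omul x z)"
  by (metis omul_assoc omul_comm)
lemmas omul_ac = omul_assoc omul_comm omul_lcomm

lemma omul_None_iff: "omul x y = None \<longleftrightarrow> x = None \<and> y = None"
  by (cases x; cases y) auto

fun opow :: "'b \<Rightarrow> nat \<Rightarrow> 'b option" where
  "opow a 0 = None"
| "opow a (Suc n) = omul (Some a) (opow a n)"

lemma opow_add: "opow a (n + k) = omul (opow a n) (opow a k)"
  by (induction n) (auto simp: omul_assoc)

lemma opow_None_iff: "opow a n = None \<longleftrightarrow> n = 0"
  by (cases n) (auto simp: omul_None_iff)

definition mon :: "(pvar \<Rightarrow> 'b) \<Rightarrow> (pvar \<Rightarrow>\<^sub>0 nat) \<Rightarrow> 'b option" where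
  "mon \<rho> m = omul (opow (\<rho> X) (Poly_Mapping.lookup m X)) (omul (opow (\<rho> DX) (Poly_Mapping.lookup m DX))
      (omul (opow (\<rho> Y) (Poly_Mapping.lookup m Y)) (opow (\<rho> DY) (Poly_Mapping.lookup m DY))))"

lemma mon_add: "mon \<rho> (m1 + m2) = omul (mon \<rho> m1) (mon \<rho> m2)"
  by (simp add: mon_def lookup_add opow_add omul_ac)

lemma mon_None_iff: "mon \<rho> m = None \<longleftrightarrow> m = 0"
  by (simp add: mon_def omul_None_iff opow_None_iff pm_zero_iff)

definition monv :: "(pvar \<Rightarrow> 'b) \<Rightarrow> (pvar \<Rightarrow>\<^sub>0 nat) \<Rightarrow> 'b" where
  "monv \<rho> m = (case mon \<rho> m of None \<Rightarrow> 0 | Some a \<Rightarrow> a)"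

lemma monv_add:
  assumes "m1 \<noteq> 0" "m2 \<noteq> 0"
  shows "monv \<rho> (m1 + m2) = mul (monv \<rho> m1) (monv \<rho> m2)"
proof -
  obtain a1 where a1: "mon \<rho> m1 = Some a1" using assms mon_None_iff by blast
  obtain a2 where a2: "mon \<rho> m2 = Some a2" using assms mon_None_iff by blast
  show ?thesis by (simp add: monv_def mon_add a1 a2)
qed

definition ev :: "(pvar \<Rightarrow> 'b) \<Rightarrow> ((pvar \<Rightarrow>\<^sub>0 nat) \<Rightarrow>\<^sub>0 rat) \<Rightarrow> 'b" where
  "ev \<rho> p = (\<Sum>m\<in>Poly_Mapping.keys p. sc (Poly_Mapping.lookup p m) (monv \<rho> m))"

lemma ev_superset:
  assumes "finite S" "Poly_Mapping.keys p \<subseteq> S"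
  shows "ev \<rho> p = (\<Sum>m\<in>S. sc (Poly_Mapping.lookup p m) (monv \<rho> m))"
  unfolding ev_def
  by (rule sum.mono_neutral_left) (use assms in \<open>auto simp: in_keys_iff\<close>)

lemma ev_add: "ev \<rho> (p + q) = ev \<rho> p + ev \<rho> q"
proof -
  let ?S = "Poly_Mapping.keys p \<union> Poly_Mapping.keys q"
  have "ev \<rho> (p + q) = (\<Sum>m\<in>?S. sc (Poly_Mapping.lookup (p + q) m) (monv \<rho> m))"
    by (rule ev_superset) (auto simp: keys_add)
  also have "\<dots> = (\<Sum>m\<in>?S. sc (Poly_Mapping.lookup p m) (monv \<rho> m)) + (\<Sum>m\<in>?S. sc (Poly_Mapping.lookup q m) (monv \<rho> m))"
    by (simp add: lookup_add sc_add2 sum.distrib)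
  also have "\<dots> = ev \<rho> p + ev \<rho> q"
    using ev_superset[of ?S p \<rho>] ev_superset[of ?S q \<rho>] by simp
  finally show ?thesis .
qed

lemma ev_zero[simp]: "ev \<rho> 0 = 0"
  by (simp add: ev_def)

lemma ev_single: "ev \<rho> (Poly_Mapping.single m c) = sc c (monv \<rho> m)"
  by (cases "c = 0") (simp_all add: ev_def)

lemma ev_sum: "ev \<rho> (\<Sum>i\<in>I. f i) = (\<Sum>i\<in>I. ev \<rho> (f i))"
  by (induction I rule: infinite_finite_induct) (auto simp: ev_add)

lemma ev_scal: "ev \<rho> (Poly_Mapping.single 0 c * p) = sc c (ev \<rho> p)"
proof -
  have "Poly_Mapping.single 0 c * p = (\<Sum>m\<in>Poly_Mapping.keys p. Poly_Mapping.single m (c * Poly_Mapping.lookup p m))"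
    by (subst poly_expand[of p]) (simp add: sum_distrib_left mult_single)
  then have "ev \<rho> (Poly_Mapping.single 0 c * p) = (\<Sum>m\<in>Poly_Mapping.keys p. sc (c * Poly_Mapping.lookup p m) (monv \<rho> m))"
    by (simp add: ev_sum ev_single)
  also have "\<dots> = sc c (ev \<rho> p)"
    by (simp add: ev_def sc_sum sc_mult)
  finally show ?thesis .
qed

lemma ev_mult:
  assumes "0 \<notin> Poly_Mapping.keys p" "0 \<notin> Poly_Mapping.keys q"
  shows "ev \<rho> (p * q) = mul (ev \<rho> p) (ev \<rho> q)"
proof -
  have "p * q = (\<Sum>m1\<in>Poly_Mapping.keys p. \<Sum>m2\<in>Poly_Mapping.keys q. Poly_Mapping.single (m1 + m2) (Poly_Mapping.lookup p m1 * Poly_Mapping.lookup q m2))"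
    by (subst poly_expand[of p], subst poly_expand[of q]) (simp add: sum_distrib_left sum_distrib_right mult_single, rule sum.swap)
  then have "ev \<rho> (p * q) = (\<Sum>m1\<in>Poly_Mapping.keys p. \<Sum>m2\<in>Poly_Mapping.keys q. sc (Poly_Mapping.lookup p m1 * Poly_Mapping.lookup q m2) (monv \<rho> (m1 + m2)))"
    by (simp add: ev_sum ev_single)
  also have "\<dots> = (\<Sum>m1\<in>Poly_Mapping.keys p. \<Sum>m2\<in>Poly_Mapping.keys q. mul (sc (Poly_Mapping.lookup p m1) (monv \<rho> m1)) (sc (Poly_Mapping.lookup q m2) (monv \<rho> m2)))"
  proof (intro sum.cong refl)
    fix m1 m2 assume "m1 \<in> Poly_Mapping.keys p" "m2 \<in> Poly_Mapping.keys q"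
    then have "m1 \<noteq> 0" "m2 \<noteq> 0" using assms by auto
    then show "sc (Poly_Mapping.lookup p m1 * Poly_Mapping.lookup q m2) (monv \<rho> (m1 + m2)) = mul (sc (Poly_Mapping.lookup p m1) (monv \<rho> m1)) (sc (Poly_Mapping.lookup q m2) (monv \<rho> m2))"
      by (simp add: monv_add msc msc2 sc_mult mult.commute)
  qed
  also have "\<dots> = mul (ev \<rho> p) (ev \<rho> q)"
    by (simp add: ev_def mul_sum_left mul_sum_right, rule sum.swap)
  finally show ?thesis .
qed

lemma ev_var: "ev \<rho> (pvar_poly x) = \<rho> x"
  by (cases x) (simp_all add: pvar_poly_def ev_single sc_one monv_def mon_def lookup_single)

fun tsem :: "(pvar \<Rightarrow> 'b) \<Rightarrow> pvar trm \<Rightarrow> 'b" where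
  "tsem \<rho> (Var x) = \<rho> x"
| "tsem \<rho> Zero = 0"
| "tsem \<rho> (Scal c u) = sc c (tsem \<rho> u)"
| "tsem \<rho> (Add u v) = tsem \<rho> u + tsem \<rho> v"
| "tsem \<rho> (Mul u v) = mul (tsem \<rho> u) (tsem \<rho> v)"

lemma ev_poly_of: "ev \<rho> (poly_of u) = tsem \<rho> u"
  by (induction u) (simp_all add: ev_var ev_scal ev_add ev_mult zero_notin_keys_poly_of)

lemma tsem_equiv: "u \<approx> v \<Longrightarrow> tsem \<rho> u = tsem \<rho> v"
  by (metis ev_poly_of term_equiv_def)

end




interpretation R: balg "(*) :: rat \<Rightarrow> rat \<Rightarrow> rat" "(*)"
  by unfold_locales (auto simp: algebra_simps)

lemma R_opow: "R.opow a n = (if n = 0 then None else Some (a ^ n))"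
  by (induction n) auto

definition phi :: "rat option \<Rightarrow> rat" where
  "phi z = (case z of None \<Rightarrow> 1 | Some a \<Rightarrow> a)"

lemma phi_None[simp]: "phi None = 1" by (simp add: phi_def)
lemma phi_Some[simp]: "phi (Some a) = a" by (simp add: phi_def)

lemma phi_omul: "phi (R.omul x y) = phi x * phi y"
  by (cases x; cases y) (auto simp: phi_def)

lemma phi_opow: "phi (R.opow a n) = a ^ n"
  by (induction n) (simp_all add: phi_omul)

lemma R_monv: "m \<noteq> 0 \<Longrightarrow> R.monv x m =
   x X ^ Poly_Mapping.lookup m X * x DX ^ Poly_Mapping.lookup m DX * x Y ^ Poly_Mapping.lookup m Y * x DY ^ Poly_Mapping.lookup m DY"
proof -
  assume "m \<noteq> 0"
  then obtain b where b: "R.mon x m = Some b" using R.mon_None_iff by (cases "R.mon x m") auto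
  have "phi (R.mon x m) = x X ^ Poly_Mapping.lookup m X * x DX ^ Poly_Mapping.lookup m DX * x Y ^ Poly_Mapping.lookup m Y * x DY ^ Poly_Mapping.lookup m DY"
    unfolding R.mon_def by (simp add: phi_omul phi_opow mult.assoc)
  then show ?thesis using b by (simp add: R.monv_def phi_def)
qed

lemma step_inj:
  fixes a a' r r' N :: nat
  assumes "a < N" "a' < N" "a + N * r = a' + N * r'"
  shows "a = a' \<and> r = r'"
proof -
  have "(a + N * r) mod N = a" "(a' + N * r') mod N = a'" using assms(1,2) by simp_all
  moreover have "(a + N * r) div N = r" "(a' + N * r') div N = r'" using assms(1,2) by simp_all
  ultimately show ?thesis using assms(3) by metis
qed

lemma rat_polyfun_eq_0:
  fixes c :: "nat \<Rightarrow> rat"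
  assumes "\<And>t. (\<Sum>i\<le>n. c i * t ^ i) = 0"
  shows "\<forall>i\<le>n. c i = 0"
proof (rule ccontr)
  assume "\<not> (\<forall>i\<le>n. c i = 0)"
  then obtain k where k: "k \<le> n" "c k \<noteq> 0" by auto
  define d where "d i = (of_rat (c i) :: real)" for i
  have dk: "d k \<noteq> 0" using k by (simp add: d_def)
  have fin: "finite {z. (\<Sum>i\<le>n. d i * z ^ i) = 0}"
    by (rule polyfun_roots_finite[of d k n]) (use dk k in auto)
  have "range (of_rat :: rat \<Rightarrow> real) \<subseteq> {z. (\<Sum>i\<le>n. d i * z ^ i) = 0}"
  proof
    fix z :: real assume "z \<in> range of_rat"
    then obtain t where t: "z = of_rat t" by auto
    have "(\<Sum>i\<le>n. d i * z ^ i) = of_rat (\<Sum>i\<le>n. c i * t ^ i)"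
      by (simp add: t d_def of_rat_sum of_rat_mult of_rat_power)
    then show "z \<in> {z. (\<Sum>i\<le>n. d i * z ^ i) = 0}" using assms by simp
  qed
  then have "finite (range (of_rat :: rat \<Rightarrow> real))" using fin finite_subset by blast
  moreover have "inj (of_rat :: rat \<Rightarrow> real)" by (simp add: inj_on_def)
  ultimately have "finite (UNIV :: rat set)" using finite_imageD by blast
  then show False using infinite_UNIV_char_0 by blast
qed

lemma lemmaZ:
  assumes zero: "\<And>x. R.ev x q = 0" and nz: "0 \<notin> Poly_Mapping.keys q"
  shows "q = 0"
proof (rule ccontr)
  assume qne: "q \<noteq> 0"
  define K where "K = Poly_Mapping.keys q"
  have finK: "finite K" by (simp add: K_def)
  define N where "N = Suc (\<Sum>m\<in>K. Poly_Mapping.lookup m X + Poly_Mapping.lookup m DX + Poly_Mapping.lookup m Y + Poly_Mapping.lookup m DY)"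
  have small: "Poly_Mapping.lookup m v < N" if "m \<in> K" for m v
  proof -
    have "Poly_Mapping.lookup m X + Poly_Mapping.lookup m DX + Poly_Mapping.lookup m Y + Poly_Mapping.lookup m DY
       \<le> (\<Sum>m\<in>K. Poly_Mapping.lookup m X + Poly_Mapping.lookup m DX + Poly_Mapping.lookup m Y + Poly_Mapping.lookup m DY)"
      by (rule member_le_sum) (use that finK in auto)
    then show ?thesis unfolding N_def by (cases v) auto
  qed
  define deg where "deg m = Poly_Mapping.lookup m X + N * (Poly_Mapping.lookup m DX + N * (Poly_Mapping.lookup m Y + N * Poly_Mapping.lookup m DY))" for m
  have deg_inj: "m = m'" if "m \<in> K" "m' \<in> K" "deg m = deg m'" for m m'
  proof -
    have A: "Poly_Mapping.lookup m X = Poly_Mapping.lookup m' X \<and> Poly_Mapping.lookup m DX + N * (Poly_Mapping.lookup m Y + N * Poly_Mapping.lookup m DY) = Poly_Mapping.lookup m' DX + N * (Poly_Mapping.lookup m' Y + N * Poly_Mapping.lookup m' DY)"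
      by (rule step_inj) (use that small in \<open>auto simp: deg_def\<close>)
    have B: "Poly_Mapping.lookup m DX = Poly_Mapping.lookup m' DX \<and> Poly_Mapping.lookup m Y + N * Poly_Mapping.lookup m DY = Poly_Mapping.lookup m' Y + N * Poly_Mapping.lookup m' DY"
      using step_inj[of "Poly_Mapping.lookup m DX" N "Poly_Mapping.lookup m' DX"] that small A by blast
    have C: "Poly_Mapping.lookup m Y = Poly_Mapping.lookup m' Y \<and> Poly_Mapping.lookup m DY = Poly_Mapping.lookup m' DY"
      using step_inj[of "Poly_Mapping.lookup m Y" N "Poly_Mapping.lookup m' Y"] that small B by blast
    show ?thesis
      by (rule pvar_pm_eqI, case_tac v) (use A B C in auto)
  qed
  define xt where "xt t = (\<lambda>v. case v of X \<Rightarrow> t | DX \<Rightarrow> t ^ N | Y \<Rightarrow> t ^ (N * N) | DY \<Rightarrow> t ^ (N * N * N))" for t :: rat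
  have monv_xt: "R.monv (xt t) m = t ^ deg m" if "m \<noteq> 0" for m t
  proof -
    have "deg m = Poly_Mapping.lookup m X + N * Poly_Mapping.lookup m DX + (N * N) * Poly_Mapping.lookup m Y + (N * N * N) * Poly_Mapping.lookup m DY"
      by (simp add: deg_def algebra_simps)
    then show ?thesis using that
      by (simp add: R_monv xt_def power_add power_mult)
  qed
  have Z: "(\<Sum>m\<in>K. Poly_Mapping.lookup q m * t ^ deg m) = 0" for t
  proof -
    have "(\<Sum>m\<in>K. Poly_Mapping.lookup q m * t ^ deg m) = (\<Sum>m\<in>K. Poly_Mapping.lookup q m * R.monv (xt t) m)"
    proof (rule sum.cong)
      fix m assume "m \<in> K"
      then have "m \<noteq> 0" using nz K_def by auto
      then show "Poly_Mapping.lookup q m * t ^ deg m = Poly_Mapping.lookup q m * R.monv (xt t) m"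
        using monv_xt by simp
    qed simp
    also have "\<dots> = R.ev (xt t) q" by (simp add: R.ev_def K_def)
    finally show ?thesis using zero by simp
  qed
  define n where "n = Max (deg ` K)"
  define c where "c j = (\<Sum>m\<in>K. if deg m = j then Poly_Mapping.lookup q m else 0)" for j
  have degn: "deg m \<le> n" if "m \<in> K" for m
    unfolding n_def using finK that by simp
  have "(\<Sum>j\<le>n. c j * t ^ j) = 0" for t
  proof -
    have "(\<Sum>j\<le>n. c j * t ^ j) = (\<Sum>j\<le>n. \<Sum>m\<in>K. if deg m = j then Poly_Mapping.lookup q m * t ^ deg m else 0)"
      unfolding c_def sum_distrib_right by (intro sum.cong refl) auto
    also have "\<dots> = (\<Sum>m\<in>K. \<Sum>j\<le>n. if deg m = j then Poly_Mapping.lookup q m * t ^ deg m else 0)"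
      by (rule sum.swap)
    also have "\<dots> = (\<Sum>m\<in>K. Poly_Mapping.lookup q m * t ^ deg m)"
      by (intro sum.cong refl) (use degn in auto)
    finally show ?thesis using Z by simp
  qed
  then have c0: "\<forall>j\<le>n. c j = 0" by (rule rat_polyfun_eq_0)
  obtain m0 where m0: "m0 \<in> K"
  proof -
    obtain k where "Poly_Mapping.lookup q k \<noteq> 0"
      using qne poly_mapping_eqI[of q 0] by auto
    then show ?thesis using that K_def by (simp add: in_keys_iff)
  qed
  have "c (deg m0) = (\<Sum>m\<in>K. if m = m0 then Poly_Mapping.lookup q m else 0)"
    unfolding c_def by (rule sum.cong) (use deg_inj m0 in auto)
  also have "\<dots> = Poly_Mapping.lookup q m0" using m0 finK by simp
  finally have "Poly_Mapping.lookup q m0 = 0" using c0 degn m0 by simp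
  then show False using m0 K_def by (simp add: in_keys_iff)
qed




lemma simple_BAC:
  assumes "simple P"
  shows "BAC (pprod P :: 'a series \<Rightarrow> 'a series \<Rightarrow> 'a series)"
proof -
  obtain \<alpha> \<beta> \<gamma> where cond: "\<alpha> * \<gamma> = \<beta> * (\<beta> - 1)" and eq: "P \<approx> Sterm \<alpha> \<beta> \<gamma>"
    using assms unfolding simple_def Sterm_def by blast
  define mulS where "mulS = (pprod (Sterm \<alpha> \<beta> \<gamma>) :: 'a series \<Rightarrow> 'a series \<Rightarrow> 'a series)"
  interpret s: sprod \<alpha> \<beta> \<gamma> mulS
    by unfold_locales (simp add: mulS_def pprod_is)
  have bac: "BAC mulS" using s.BAC cond .
  interpret b: balg mulS "\<lambda>c f w. c * f w"
  proof unfold_locales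
    fix a b c :: "'a series" and r s :: rat
    show "mulS (a + b) c = mulS a c + mulS b c"
      by (simp add: plus_fun_def s.add_left)
    show "mulS (\<lambda>w. r * a w) b = (\<lambda>w. r * mulS a b w)" by (rule s.scal_left)
    show "mulS a b = mulS b a" by (rule s.comm)
    show "mulS a (mulS b c) = mulS (mulS a b) c" by (rule ext, rule s.assoc_pt[OF cond])
    show "(\<lambda>w. r * (a + b) w) = (\<lambda>w. r * a w) + (\<lambda>w. r * b w)"
      by (simp add: plus_fun_def algebra_simps)
    show "(\<lambda>w. (r + s) * a w) = (\<lambda>w. r * a w) + (\<lambda>w. s * a w)"
      by (simp add: plus_fun_def algebra_simps)
    show "(\<lambda>w. r * (s * a w)) = (\<lambda>w. (r * s) * a w)"
      by (simp add: algebra_simps)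
    show "(\<lambda>w. 1 * a w) = a" by simp
  qed
  have semt: "sem mulS \<rho> u = b.tsem \<rho> u" for \<rho> u
    by (induction u) (simp_all add: plus_fun_def zero_fun_def)
  have "is_P_product P mulS"
    unfolding is_P_product_def
  proof (intro conjI allI)
    fix f g :: "'a series" and a
    show "mulS f g [] = f [] * g []" by (rule s.nil)
    have "lderiv a (mulS f g) = sem mulS (pval f (lderiv a f) g (lderiv a g)) (Sterm \<alpha> \<beta> \<gamma>)"
      using s.isP unfolding is_P_product_def by blast
    also have "\<dots> = sem mulS (pval f (lderiv a f) g (lderiv a g)) P"
      using b.tsem_equiv[OF eq] by (simp add: semt)
    finally show "lderiv a (mulS f g) = sem mulS (pval f (lderiv a f) g (lderiv a g)) P" .
  qed
  then have "pprod P = mulS" by (rule pprod_eq)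
  then show ?thesis using bac by simp
qed

lemma sem_nil:
  assumes "\<And>f g. m f g [] = f [] * g []"
  shows "sem m \<rho> u [] = R.tsem (\<lambda>v. \<rho> v []) u"
  by (induction u) (simp_all add: assms)

definition qv :: "rat \<Rightarrow> rat \<Rightarrow> rat \<Rightarrow> rat \<Rightarrow> pvar \<Rightarrow> rat" where
  "qv x0 x1 y0 y1 v = (case v of X \<Rightarrow> x0 | DX \<Rightarrow> x1 | Y \<Rightarrow> y0 | DY \<Rightarrow> y1)"

definition mk :: "rat \<Rightarrow> rat \<Rightarrow> 'a series" where
  "mk u v = (\<lambda>w. if w = [] then u else v)"

lemma BAC_simple:
  assumes bac: "BAC (pprod P :: 'a series \<Rightarrow> 'a series \<Rightarrow> 'a series)"
  shows "simple P"
proof -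
  define mul where "mul = (pprod P :: 'a series \<Rightarrow> 'a series \<Rightarrow> 'a series)"
  define a :: 'a where "a = undefined"
  define F where "F x0 x1 y0 y1 = R.tsem (qv x0 x1 y0 y1) P" for x0 x1 y0 y1
  have isP: "is_P_product P mul" unfolding mul_def by (rule pprod_is)
  have nil: "mul f g [] = f [] * g []" for f g using isP unfolding is_P_product_def by blast
  have key: "mul f g [a] = F (f []) (f [a]) (g []) (g [a])" for f g
  proof -
    have "mul f g [a] = lderiv a (mul f g) []" by (simp add: lderiv_def)
    also have "\<dots> = sem mul (pval f (lderiv a f) g (lderiv a g)) P []"
      using isP unfolding is_P_product_def by simp
    also have "\<dots> = R.tsem (\<lambda>v. pval f (lderiv a f) g (lderiv a g) v []) P"
      by (rule sem_nil) (rule nil)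
    also have "(\<lambda>v. pval f (lderiv a f) g (lderiv a g) v []) = qv (f []) (f [a]) (g []) (g [a])"
      by (rule ext, case_tac v) (simp_all add: pval_def qv_def lderiv_def)
    finally show ?thesis by (simp add: F_def)
  qed
  have bA: "mul (\<lambda>w. f w + g w) h = (\<lambda>w. mul f h w + mul g h w)" for f g h
    using bac unfolding BAC_def mul_def by blast
  have bS: "mul (\<lambda>w. c * f w) g = (\<lambda>w. c * mul f g w)" for c f g
    using bac unfolding BAC_def mul_def by blast
  have bAs: "mul f (mul g h) = mul (mul f g) h" for f g h
    using bac unfolding BAC_def mul_def by blast
  have bC: "mul f g = mul g f" for f g
    using bac unfolding BAC_def mul_def by blast
  have Fadd: "F (x0 + x0') (x1 + x1') y0 y1 = F x0 x1 y0 y1 + F x0' x1' y0 y1" for x0 x0' x1 x1' y0 y1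
    using fun_cong[OF bA[of "mk x0 x1" "mk x0' x1'" "mk y0 y1"], of "[a]"]
    by (simp add: key mk_def)
  have Fsc: "F (c * x0) (c * x1) y0 y1 = c * F x0 x1 y0 y1" for c x0 x1 y0 y1
    using fun_cong[OF bS[of c "mk x0 x1" "mk y0 y1"], of "[a]"]
    by (simp add: key mk_def)
  have Fcomm: "F x0 x1 y0 y1 = F y0 y1 x0 x1" for x0 x1 y0 y1
    using fun_cong[OF bC[of "mk x0 x1" "mk y0 y1"], of "[a]"]
    by (simp add: key mk_def)
  have Fassoc: "F x0 x1 (y0 * z0) (F y0 y1 z0 z1) = F (x0 * y0) (F x0 x1 y0 y1) z0 z1" for x0 x1 y0 y1 z0 z1
    using fun_cong[OF bAs[of "mk x0 x1" "mk y0 y1" "mk z0 z1"], of "[a]"]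
    by (simp add: key mk_def nil)
  have lin: "F x0 x1 y0 y1 = x0 * F 1 0 y0 y1 + x1 * F 0 1 y0 y1" for x0 x1 y0 y1
    using Fadd[of "x0 * 1" "x1 * 0" "x0 * 0" "x1 * 1" y0 y1] Fsc[of x0 1 0 y0 y1] Fsc[of x1 0 1 y0 y1]
    by simp
  obtain \<alpha> \<beta> \<gamma> where form: "\<And>x0 x1 y0 y1. F x0 x1 y0 y1 = \<alpha> * x0 * y0 + \<beta> * (x0 * y1 + x1 * y0) + \<gamma> * x1 * y1"
  proof -
    have "F x0 x1 y0 y1 = F 1 0 1 0 * x0 * y0 + F 1 0 0 1 * (x0 * y1 + x1 * y0) + F 0 1 0 1 * x1 * y1" for x0 x1 y0 y1
    proof -
      have "F 1 0 y0 y1 = y0 * F 1 0 1 0 + y1 * F 0 1 1 0"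
        using Fcomm[of 1 0 y0 y1] lin[of y0 y1 1 0] by simp
      moreover have "F 0 1 y0 y1 = y0 * F 1 0 0 1 + y1 * F 0 1 0 1"
        using Fcomm[of 0 1 y0 y1] lin[of y0 y1 0 1] by simp
      moreover have "F 0 1 1 0 = F 1 0 0 1" using Fcomm[of 0 1 1 0] by simp
      ultimately show ?thesis using lin[of x0 x1 y0 y1] by (simp add: algebra_simps)
    qed
    then show ?thesis using that by blast
  qed
  have cond: "\<alpha> * \<gamma> = \<beta> * (\<beta> - 1)"
    using Fassoc[of 1 0 1 0 0 1] unfolding form by (simp add: algebra_simps)
  have tP: "R.tsem x P = R.tsem x (Sterm \<alpha> \<beta> \<gamma>)" for x
  proof -
    have "x = qv (x X) (x DX) (x Y) (x DY)" by (rule ext, case_tac xa) (simp_all add: qv_def)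
    then have "R.tsem x P = F (x X) (x DX) (x Y) (x DY)" by (simp add: F_def)
    also have "\<dots> = R.tsem x (Sterm \<alpha> \<beta> \<gamma>)" by (simp add: form Sterm_def algebra_simps)
    finally show ?thesis .
  qed
  define q where "q = poly_of P - poly_of (Sterm \<alpha> \<beta> \<gamma>)"
  have evq: "R.ev x q = 0" for x
  proof -
    have "R.ev x (poly_of P) = R.ev x (q + poly_of (Sterm \<alpha> \<beta> \<gamma>))" by (simp add: q_def)
    also have "\<dots> = R.ev x q + R.ev x (poly_of (Sterm \<alpha> \<beta> \<gamma>))" by (rule R.ev_add)
    finally show ?thesis by (simp add: R.ev_poly_of tP)
  qed
  have "0 \<notin> Poly_Mapping.keys q"
    using zero_notin_keys_poly_of[of P] zero_notin_keys_poly_of[of "Sterm \<alpha> \<beta> \<gamma>"]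
    by (simp add: q_def in_keys_iff lookup_minus)
  then have "q = 0" using lemmaZ evq by blast
  then have "P \<approx> Sterm \<alpha> \<beta> \<gamma>" by (simp add: q_def term_equiv_def)
  then show ?thesis using cond unfolding simple_def Sterm_def by blast
qed

theorem mainTheorem2:
  fixes P :: prule
  shows "BAC (pprod P :: ('a::finite) series \<Rightarrow> 'a series \<Rightarrow> 'a series) \<longleftrightarrow> simple P"
  using simple_BAC BAC_simple by blast


end
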